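(* Let $X \subseteq {}^\omega 2$ with $|X| = \mathfrak{c}$. Then there exists $X' \subseteq X$ with $|X'| = \mathfrak{c}$ and $X' \in s_0$.
   Context: ${}^\omega 2$ is the Cantor space; $\mathfrak c=2^{\aleph_0}$. A set $Y \subseteq {}^\omega 2$ is Marczewski null ($Y \in s_0$) if for every perfect set $P \subseteq {}^\omega 2$ there is a perfect set $Q \subseteq P$ with $Q \cap Y = \emptyset$. *)

theory Defs
  imports "HOL-Analysis.Analysis" "HOL-Library.Equipollence"
begin

text \<open>Cantor space: nat \<Rightarrow> bool with the product topology (Function_Topology).
  A perfect set is a nonempty closed set without isolated points.\<close>

definition perfect_set :: "(nat \<Rightarrow> bool) set \<Rightarrow> bool" where
  "perfect_set P \<longleftrightarrow> P \<noteq> {} \<and> closed P \<and> (\<forall>x\<in>P. x islimpt P)"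

text \<open>Marczewski null sets (the ideal s_0).\<close>

definition marczewski_null :: "(nat \<Rightarrow> bool) set \<Rightarrow> bool" where
  "marczewski_null Y \<longleftrightarrow>
     (\<forall>P. perfect_set P \<longrightarrow> (\<exists>Q. perfect_set Q \<and> Q \<subseteq> P \<and> Q \<inter> Y = {}))"

end

theory Submission
  imports Defs
begin

unbundle cardinal_syntax


definition agr :: "nat \<Rightarrow> (nat\<Rightarrow>bool) \<Rightarrow> (nat\<Rightarrow>bool) \<Rightarrow> bool" where
  "agr n x y \<longleftrightarrow> (\<forall>i<n. x i = y i)"

lemma agr_refl [simp]: "agr n x x" by (simp add: agr_def)
lemma agr_sym: "agr n x y \<Longrightarrow> agr n y x" by (simp add: agr_def)
lemma agr_trans: "agr n x y \<Longrightarrow> agr n y z \<Longrightarrow> agr n x z" by (simp add: agr_def)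
lemma agr_mono: "agr n x y \<Longrightarrow> m \<le> n \<Longrightarrow> agr m x y" by (simp add: agr_def)

definition cyl :: "nat \<Rightarrow> (nat\<Rightarrow>bool) \<Rightarrow> (nat\<Rightarrow>bool) set" where
  "cyl n x = {y. agr n x y}"

lemma open_cyl: "open (cyl n x)"
proof -
  have "open {f::nat\<Rightarrow>bool. \<forall>i\<in>{..<n}. f (id i) \<in> (\<lambda>i. {x i}) i}"
    by (rule product_topology_basis') (auto intro: open_discrete)
  moreover have "{f::nat\<Rightarrow>bool. \<forall>i\<in>{..<n}. f (id i) \<in> (\<lambda>i. {x i}) i} = cyl n x"
    by (auto simp: cyl_def agr_def)
  ultimately show ?thesis by simp
qed

lemma open_contains_cyl:
  assumes "open U" "x \<in> U" shows "\<exists>n. cyl n x \<subseteq> U"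
proof -
  have "openin (product_topology (\<lambda>i::nat. (euclidean::bool topology)) UNIV) U"
    using assms(1) by (simp add: open_fun_def)
  from product_topology_open_contains_basis[OF this assms(2)] obtain X where
    X: "x \<in> (\<Pi>\<^sub>E i\<in>UNIV. X i)" "finite {i. X i \<noteq> topspace (euclidean::bool topology)}"
       "(\<Pi>\<^sub>E i\<in>UNIV. X i) \<subseteq> U" by blast
  then obtain n where n: "{i. X i \<noteq> UNIV} \<subseteq> {..<n}"
    by (auto simp: finite_nat_iff_bounded)
  have "cyl n x \<subseteq> (\<Pi>\<^sub>E i\<in>UNIV. X i)"
  proof
    fix y assume "y \<in> cyl n x"
    then have "\<forall>i<n. y i = x i" by (simp add: cyl_def agr_def)
    have "y i \<in> X i" for i
    proof (cases "i < n")
      case True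
      then show ?thesis using \<open>\<forall>i<n. y i = x i\<close> X(1) by (simp add: PiE_iff)
    next
      case False
      then have "X i = UNIV" using n by blast
      then show ?thesis by simp
    qed
    then show "y \<in> (\<Pi>\<^sub>E i\<in>UNIV. X i)" by (simp add: PiE_iff)
  qed
  with X(3) show ?thesis by blast
qed

lemma closed_iff: "closed S \<longleftrightarrow> (\<forall>x. (\<forall>n. \<exists>y\<in>S. agr n x y) \<longrightarrow> x \<in> S)"
proof
  assume c: "closed S"
  show "\<forall>x. (\<forall>n. \<exists>y\<in>S. agr n x y) \<longrightarrow> x \<in> S"
  proof (intro allI impI, rule ccontr)
    fix x assume h: "\<forall>n. \<exists>y\<in>S. agr n x y" "x \<notin> S"
    then obtain n where "cyl n x \<subseteq> -S" using open_contains_cyl[of "-S" x] c by (auto simp: closed_def)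
    with h(1) show False by (auto simp: cyl_def)
  qed
next
  assume h: "\<forall>x. (\<forall>n. \<exists>y\<in>S. agr n x y) \<longrightarrow> x \<in> S"
  have "\<forall>x\<in>-S. \<exists>T. open T \<and> x \<in> T \<and> T \<subseteq> -S"
  proof
    fix x assume "x \<in> -S"
    then obtain n where "\<forall>y\<in>S. \<not> agr n x y" using h by blast
    then show "\<exists>T. open T \<and> x \<in> T \<and> T \<subseteq> -S"
      using open_cyl[of n x] by (intro exI[of _ "cyl n x"]) (auto simp: cyl_def)
  qed
  then have "open (-S)" by (subst open_subopen[of "-S"])
  then show "closed S" by (simp add: closed_def)
qed

lemma islimpt_iff: "x islimpt S \<longleftrightarrow> (\<forall>n. \<exists>y\<in>S. y \<noteq> x \<and> agr n x y)"
proof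
  assume "x islimpt S"
  then show "\<forall>n. \<exists>y\<in>S. y \<noteq> x \<and> agr n x y"
  proof (intro allI)
    fix n
    have "x \<in> cyl n x" by (simp add: cyl_def agr_def)
    with \<open>x islimpt S\<close> open_cyl obtain y where "y \<in> S" "y \<in> cyl n x" "y \<noteq> x"
      unfolding islimpt_def by blast
    then show "\<exists>y\<in>S. y \<noteq> x \<and> agr n x y" by (auto simp: cyl_def)
  qed
next
  assume h: "\<forall>n. \<exists>y\<in>S. y \<noteq> x \<and> agr n x y"
  show "x islimpt S" unfolding islimpt_def
  proof (intro allI impI)
    fix T assume "x \<in> T" "open T"
    then obtain n where "cyl n x \<subseteq> T" using open_contains_cyl by blast
    with h show "\<exists>y\<in>S. y \<in> T \<and> y \<noteq> x" by (auto simp: cyl_def)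
  qed
qed

definition cl :: "(nat\<Rightarrow>bool) set \<Rightarrow> bool" where
  "cl S \<longleftrightarrow> (\<forall>x. (\<forall>n. \<exists>y\<in>S. agr n x y) \<longrightarrow> x \<in> S)"

definition perf :: "(nat\<Rightarrow>bool) set \<Rightarrow> bool" where
  "perf P \<longleftrightarrow> P \<noteq> {} \<and> cl P \<and> (\<forall>x\<in>P. \<forall>n. \<exists>y\<in>P. y \<noteq> x \<and> agr n x y)"

lemma perfect_iff: "perfect_set P \<longleftrightarrow> perf P"
  unfolding perfect_set_def perf_def cl_def closed_iff islimpt_iff by blast



locale scheme =
  fixes P :: "(nat\<Rightarrow>bool) set" and I :: "nat set"
  assumes clP: "cl P" and neP: "P \<noteq> {}"
  and H: "\<And>x n. x \<in> P \<Longrightarrow> \<exists>a\<in>P. \<exists>b\<in>P. agr n x a \<and> agr n x b \<and> (\<exists>i\<in>I. a i \<noteq> b i)"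
begin

definition sp :: "(nat\<Rightarrow>bool) \<Rightarrow> nat \<Rightarrow> (nat\<Rightarrow>bool) \<times> (nat\<Rightarrow>bool) \<times> nat" where
  "sp x n = (SOME t. fst t \<in> P \<and> fst (snd t) \<in> P \<and> agr n x (fst t) \<and> agr n x (fst (snd t))
        \<and> snd (snd t) \<in> I \<and> fst t (snd (snd t)) \<noteq> fst (snd t) (snd (snd t)))"

lemma sp_spec:
  assumes "x \<in> P"
  shows "fst (sp x n) \<in> P \<and> fst (snd (sp x n)) \<in> P \<and> agr n x (fst (sp x n)) \<and> agr n x (fst (snd (sp x n)))
        \<and> snd (snd (sp x n)) \<in> I \<and> fst (sp x n) (snd (snd (sp x n))) \<noteq> fst (snd (sp x n)) (snd (snd (sp x n)))"
proof -
  from H[OF assms, of n] obtain a b i where "a \<in> P" "b \<in> P" "agr n x a" "agr n x b" "i \<in> I" "a i \<noteq> b i"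
    by blast
  then have "\<exists>t. fst t \<in> P \<and> fst (snd t) \<in> P \<and> agr n x (fst t) \<and> agr n x (fst (snd t))
        \<and> snd (snd t) \<in> I \<and> fst t (snd (snd t)) \<noteq> fst (snd t) (snd (snd t))"
    by (intro exI[of _ "(a,b,i)"]) simp
  then show ?thesis unfolding sp_def by (rule someI_ex)
qed

fun st :: "(nat\<Rightarrow>bool) \<Rightarrow> nat \<Rightarrow> (nat\<Rightarrow>bool) \<times> nat" where
  "st z 0 = (SOME p. p \<in> P, 0)"
| "st z (Suc k) = (if z k then fst (snd (sp (fst (st z k)) (snd (st z k)))) else fst (sp (fst (st z k)) (snd (st z k))),
      max (Suc (snd (snd (sp (fst (st z k)) (snd (st z k)))))) (Suc (snd (st z k))))"

definition pt where "pt z k = fst (st z k)"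
definition Ln where "Ln z k = snd (st z k)"

lemma pt_P: "pt z k \<in> P"
proof (induction k)
  case 0
  then show ?case using neP by (simp add: pt_def some_in_eq)
next
  case (Suc k)
  then show ?case using sp_spec[of "pt z k" "Ln z k"] by (simp add: pt_def Ln_def)
qed

lemma Ln_Suc: "Ln z k < Ln z (Suc k)"
  by (simp add: Ln_def)

lemma Ln_mono: "k \<le> k' \<Longrightarrow> Ln z k \<le> Ln z k'"
  by (rule lift_Suc_mono_le[of "\<lambda>k. Ln z k"]) (auto intro: less_imp_le Ln_Suc)

lemma Ln_ge: "k \<le> Ln z k"
proof (induction k)
  case 0 then show ?case by simp
next
  case (Suc k) then show ?case using Ln_Suc[of z k] by simp
qed

lemma pt_step: "agr (Ln z k) (pt z k) (pt z (Suc k))"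
  using sp_spec[OF pt_P[of z k], of "Ln z k"] by (simp add: pt_def Ln_def)

lemma pt_later: "k \<le> k' \<Longrightarrow> agr (Ln z k) (pt z k) (pt z k')"
proof (induction k' rule: dec_induct)
  case base then show ?case by simp
next
  case (step m)
  have "agr (Ln z k) (pt z m) (pt z (Suc m))"
    using agr_mono[OF pt_step[of z m] Ln_mono[OF step(1), of z]] .
  then show ?case using agr_trans[OF step(3)] by blast
qed

definition e :: "(nat\<Rightarrow>bool) \<Rightarrow> (nat\<Rightarrow>bool)" where
  "e z = (\<lambda>j. pt z (Suc j) j)"

lemma e_agr: "agr (Ln z k) (pt z k) (e z)"
  unfolding agr_def
proof (intro allI impI)
  fix j assume j: "j < Ln z k"
  define m where "m = max k (Suc j)"
  have 1: "agr (Ln z k) (pt z k) (pt z m)" using pt_later[of k m z] by (simp add: m_def)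
  have "agr (Ln z (Suc j)) (pt z (Suc j)) (pt z m)" using pt_later[of "Suc j" m z] by (simp add: m_def)
  moreover have "j < Ln z (Suc j)" using Ln_ge[of "Suc j" z] by simp
  ultimately have 2: "pt z (Suc j) j = pt z m j" by (simp add: agr_def)
  show "pt z k j = e z j" using 1 2 j by (simp add: agr_def e_def)
qed

lemma e_P: "e z \<in> P"
proof -
  have "\<forall>n. \<exists>y\<in>P. agr n (e z) y"
  proof
    fix n
    have "agr n (pt z n) (e z)" using agr_mono[OF e_agr[of z n] Ln_ge[of n z]] .
    then show "\<exists>y\<in>P. agr n (e z) y" using pt_P[of z n] agr_sym[OF \<open>agr n (pt z n) (e z)\<close>] by blast
  qed
  then show ?thesis using clP by (simp add: cl_def)
qed

lemma st_prefix: "agr k z w \<Longrightarrow> st z k = st w k"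
proof (induction k)
  case 0 then show ?case by simp
next
  case (Suc k)
  then have "agr k z w" "z k = w k" by (auto simp: agr_def)
  with Suc.IH show ?case by simp
qed

lemma pt_prefix: "agr k z w \<Longrightarrow> pt z k = pt w k" and Ln_prefix: "agr k z w \<Longrightarrow> Ln z k = Ln w k"
  using st_prefix by (auto simp: pt_def Ln_def)

lemma e_cont: "agr n z w \<Longrightarrow> agr n (e z) (e w)"
proof -
  assume a: "agr n z w"
  have "agr (Ln z n) (pt z n) (e z)" "agr (Ln z n) (pt z n) (e w)"
    using e_agr[of z n] e_agr[of w n] pt_prefix[OF a] Ln_prefix[OF a] by auto
  then have "agr (Ln z n) (e z) (e w)" using agr_trans[OF agr_sym] by blast
  then show ?thesis using agr_mono[OF _ Ln_ge[of n z]] by blast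
qed

lemma e_sep:
  assumes "z k \<noteq> w k" "agr k z w"
  shows "\<exists>i\<in>I. i < Ln z (Suc k) \<and> e z i \<noteq> e w i"
proof -
  have st: "st z k = st w k" using st_prefix[OF assms(2)] .
  define x where "x = pt z k"
  define n where "n = Ln z k"
  have xP: "x \<in> P" using pt_P by (simp add: x_def)
  have stw: "pt w k = x" "Ln w k = n" using st by (auto simp: x_def n_def pt_def Ln_def)
  define i where "i = snd (snd (sp x n))"
  have spec: "i \<in> I" "fst (sp x n) i \<noteq> fst (snd (sp x n)) i"
    using sp_spec[OF xP, of n] by (auto simp: i_def)
  have Lz: "Ln z (Suc k) = max (Suc i) (Suc n)" and Lw: "Ln w (Suc k) = max (Suc i) (Suc n)"
    using stw by (auto simp: Ln_def pt_def x_def n_def i_def)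
  have pz: "pt z (Suc k) = (if z k then fst (snd (sp x n)) else fst (sp x n))"
    by (simp add: pt_def x_def n_def Ln_def)
  have pw: "pt w (Suc k) = (if w k then fst (snd (sp x n)) else fst (sp x n))"
    using stw by (simp add: pt_def Ln_def)
  have "agr (Ln z (Suc k)) (pt z (Suc k)) (e z)" "agr (Ln w (Suc k)) (pt w (Suc k)) (e w)"
    using e_agr by auto
  then have "e z i = pt z (Suc k) i" "e w i = pt w (Suc k) i"
    using Lz Lw by (auto simp: agr_def)
  then have "e z i \<noteq> e w i" using pz pw spec(2) assms(1) by auto
  moreover have "i < Ln z (Suc k)" using Lz by simp
  ultimately show ?thesis using spec(1) by blast
qed

lemma e_sep2: "z \<noteq> w \<Longrightarrow> \<exists>i\<in>I. e z i \<noteq> e w i"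
proof -
  assume "z \<noteq> w"
  then obtain k where "z k \<noteq> w k" by auto
  define k0 where "k0 = (LEAST k. z k \<noteq> w k)"
  have 1: "z k0 \<noteq> w k0" unfolding k0_def by (rule LeastI) fact
  have 2: "agr k0 z w" unfolding agr_def k0_def using not_less_Least by blast
  from e_sep[OF 1 2] show ?thesis by blast
qed

definition tr :: "nat \<Rightarrow> (nat\<Rightarrow>bool) \<Rightarrow> (nat\<Rightarrow>bool)" where
  "tr n z = (\<lambda>i. if i < n then z i else False)"

lemma finite_tr: "finite (range (tr n))"
proof -
  have "inj_on (\<lambda>f. {i. f i}) (range (tr n))"
  proof (rule inj_onI)
    fix f g :: "nat\<Rightarrow>bool" assume "{i. f i} = {i. g i}"
    then show "f = g" by (simp add: set_eq_iff fun_eq_iff)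
  qed
  moreover have "(\<lambda>f. {i. f i}) ` range (tr n) \<subseteq> Pow {..<n}"
    by (auto simp: tr_def split: if_splits)
  moreover have "finite (Pow {..<n})" by simp
  ultimately have "finite ((\<lambda>f. {i. f i}) ` range (tr n))" using finite_subset by blast
  then show ?thesis using \<open>inj_on _ _\<close> by (rule finite_imageD)
qed

lemma Ln_bounded: "\<exists>M. \<forall>z. Ln z n \<le> M"
proof -
  have "agr n z (tr n z)" for z by (simp add: agr_def tr_def)
  then have eq: "Ln z n = Ln (tr n z) n" for z using Ln_prefix by blast
  have "finite ((\<lambda>z. Ln z n) ` range (tr n))" using finite_tr by simp
  then obtain M where "\<forall>y\<in>(\<lambda>z. Ln z n) ` range (tr n). y \<le> M"
    using finite_nat_set_iff_bounded_le by blast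
  then have "Ln z n \<le> M" for z using eq[of z] by auto
  then show ?thesis by blast
qed

lemma e_inv_cont: "\<exists>m. \<forall>z w. agr m (e z) (e w) \<longrightarrow> agr n z w"
proof -
  obtain M where M: "\<forall>z. Ln z n \<le> M" using Ln_bounded by blast
  have "agr M (e z) (e w) \<longrightarrow> agr n z w" for z w
  proof (rule impI, rule ccontr)
    assume a: "agr M (e z) (e w)" "\<not> agr n z w"
    then obtain k where "k < n" "z k \<noteq> w k" by (auto simp: agr_def)
    define k0 where "k0 = (LEAST k. z k \<noteq> w k)"
    have k0: "z k0 \<noteq> w k0" unfolding k0_def by (rule LeastI) fact
    have "k0 \<le> k" unfolding k0_def by (rule Least_le) fact
    have "agr k0 z w" unfolding agr_def k0_def using not_less_Least by blast
    from e_sep[OF k0 this] obtain i where i: "i < Ln z (Suc k0)" "e z i \<noteq> e w i" by blast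
    have "Ln z (Suc k0) \<le> Ln z n" using Ln_mono \<open>k0 \<le> k\<close> \<open>k < n\<close> by simp
    then have "i < M" using i(1) M[rule_format, of z] by linarith
    then show False using a(1) i(2) by (simp add: agr_def)
  qed
  then show ?thesis by blast
qed

end

lemma scheme_exists:
  assumes "cl P" "P \<noteq> {}"
    and "\<forall>x\<in>P. \<forall>n. \<exists>a\<in>P. \<exists>b\<in>P. agr n x a \<and> agr n x b \<and> (\<exists>i\<in>I. a i \<noteq> b i)"
  shows "\<exists>e. (\<forall>z. e z \<in> P) \<and> (\<forall>n z w. agr n z w \<longrightarrow> agr n (e z) (e w))
     \<and> (\<forall>n. \<exists>m. \<forall>z w. agr m (e z) (e w) \<longrightarrow> agr n z w) \<and> (\<forall>z w. z \<noteq> w \<longrightarrow> (\<exists>i\<in>I. e z i \<noteq> e w i))"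
proof -
  interpret scheme P I using assms by unfold_locales auto
  show ?thesis
  proof (rule exI[where x=e], intro conjI allI impI)
    fix z :: "nat\<Rightarrow>bool" show "e z \<in> P" by (rule e_P)
  next
    fix n and z w :: "nat\<Rightarrow>bool" assume "agr n z w" then show "agr n (e z) (e w)" by (rule e_cont)
  next
    fix n show "\<exists>m. \<forall>z w. agr m (e z) (e w) \<longrightarrow> agr n z w" by (rule e_inv_cont)
  next
    fix z w :: "nat\<Rightarrow>bool" assume "z \<noteq> w" then show "\<exists>i\<in>I. e z i \<noteq> e w i" by (rule e_sep2)
  qed
qed






definition nice :: "((nat\<Rightarrow>bool) \<Rightarrow> (nat\<Rightarrow>bool)) \<Rightarrow> bool" where
  "nice e \<longleftrightarrow> inj e \<and> (\<forall>n z w. agr n z w \<longrightarrow> agr n (e z) (e w))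
     \<and> (\<forall>n. \<exists>m. \<forall>z w. agr m (e z) (e w) \<longrightarrow> agr n z w)"

lemma perf_H:
  assumes "perf P" "x \<in> P"
  shows "\<exists>a\<in>P. \<exists>b\<in>P. agr n x a \<and> agr n x b \<and> (\<exists>i\<in>UNIV. a i \<noteq> b i)"
proof -
  from assms obtain y where "y \<in> P" "y \<noteq> x" "agr n x y" unfolding perf_def by blast
  then show ?thesis using assms(2) by (intro bexI[of _ x] bexI[of _ y]) (auto simp: fun_eq_iff)
qed

lemma scheme_nice:
  assumes "perf P" shows "\<exists>e. nice e \<and> range e \<subseteq> P"
proof -
  have H: "\<forall>x\<in>P. \<forall>n. \<exists>a\<in>P. \<exists>b\<in>P. agr n x a \<and> agr n x b \<and> (\<exists>i\<in>UNIV. a i \<noteq> b i)"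
    using perf_H[OF assms] by blast
  have "cl P" "P \<noteq> {}" using assms by (auto simp: perf_def)
  from scheme_exists[OF this H] obtain e where
    e: "\<forall>z. e z \<in> P" "\<forall>n z w. agr n z w \<longrightarrow> agr n (e z) (e w)"
       "\<forall>n. \<exists>m. \<forall>z w. agr m (e z) (e w) \<longrightarrow> agr n z w" "\<forall>z w. z \<noteq> w \<longrightarrow> (\<exists>i\<in>UNIV. e z i \<noteq> e w i)"
    by (elim exE conjE) (rule that)
  have "inj e"
  proof (rule injI)
    fix z w assume ez: "e z = e w"
    show "z = w"
    proof (rule ccontr)
      assume "z \<noteq> w"
      then obtain i where "e z i \<noteq> e w i" using e(4) by blast
      then show False using ez by simp
    qed
  qed
  then have "nice e" using e(2,3) by (simp add: nice_def)
  moreover have "range e \<subseteq> P" using e(1) by blast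
  ultimately show ?thesis by (intro exI[of _ e] conjI)
qed

lemma nice_image_perf:
  assumes ne: "nice e" and R: "perf R"
  shows "perf (e ` R)"
proof -
  have inj: "inj e" and cont: "\<And>n z w. agr n z w \<Longrightarrow> agr n (e z) (e w)"
    using ne by (auto simp: nice_def)
  from ne have "\<forall>n. \<exists>m. \<forall>z w. agr m (e z) (e w) \<longrightarrow> agr n z w" by (simp add: nice_def)
  then obtain mm where mm: "\<And>n z w. agr (mm n) (e z) (e w) \<Longrightarrow> agr n z w" by metis
  have clR: "cl R" and limR: "\<forall>x\<in>R. \<forall>n. \<exists>y\<in>R. y \<noteq> x \<and> agr n x y" and neR: "R \<noteq> {}"
    using R by (auto simp: perf_def)
  have "cl (e ` R)" unfolding cl_def
  proof (intro allI impI)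
    fix x assume hx: "\<forall>n. \<exists>y\<in>e ` R. agr n x y"
    define MM where "MM n = Max ((\<lambda>j. max j (mm j)) ` {..n})" for n
    have MM1: "j \<le> n \<Longrightarrow> mm j \<le> MM n" for j n
      unfolding MM_def by (rule order.trans[OF _ Max_ge[of _ "max j (mm j)"]]) auto
    have MM2: "n \<le> MM n" for n
      unfolding MM_def by (rule order.trans[OF _ Max_ge[of _ "max n (mm n)"]]) auto
    have "\<forall>n. \<exists>z. z \<in> R \<and> agr (MM n) x (e z)" using hx by blast
    then obtain y where y: "\<And>n. y n \<in> R" "\<And>n. agr (MM n) x (e (y n))" by metis
    have yy: "agr j (y j) (y k)" if "j \<le> k" for j k
    proof -
      have "agr (mm j) x (e (y j))" using y(2)[of j] MM1[of j j] agr_mono by blast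
      moreover have "agr (mm j) x (e (y k))" using y(2)[of k] MM1[OF that] agr_mono by blast
      ultimately have "agr (mm j) (e (y j)) (e (y k))" using agr_trans[OF agr_sym] by blast
      then show ?thesis by (rule mm)
    qed
    define x' where "x' = (\<lambda>i. y (Suc i) i)"
    have ax: "agr n x' (y n)" for n
      unfolding agr_def
    proof (intro allI impI)
      fix i assume "i < n"
      then have "agr (Suc i) (y (Suc i)) (y n)" using yy by simp
      then show "x' i = y n i" by (simp add: x'_def agr_def)
    qed
    have "x' \<in> R" using clR ax y(1) unfolding cl_def by blast
    moreover have "e x' = x"
    proof
      fix i
      have "agr (Suc i) (e x') (e (y (Suc i)))" using cont[OF ax] .
      moreover have "agr (Suc i) (e (y (Suc i))) x"
        using agr_sym[OF agr_mono[OF y(2)[of "Suc i"] MM2[of "Suc i"]]] .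
      ultimately show "e x' i = x i" by (auto simp: agr_def)
    qed
    ultimately show "x \<in> e ` R" by blast
  qed
  moreover have "\<forall>x\<in>e ` R. \<forall>n. \<exists>y\<in>e ` R. y \<noteq> x \<and> agr n x y"
  proof (intro ballI allI)
    fix x n assume "x \<in> e ` R"
    then obtain z where z: "z \<in> R" "x = e z" by blast
    then obtain w where "w \<in> R" "w \<noteq> z" "agr n z w" using limR by blast
    then show "\<exists>y\<in>e ` R. y \<noteq> x \<and> agr n x y"
      using z inj cont by (intro bexI[of _ "e w"]) (auto simp: inj_def)
  qed
  ultimately show ?thesis using neR by (simp add: perf_def)
qed

lemma perf_UNIV: "perf UNIV"
proof -
  have "\<exists>y. y \<noteq> x \<and> agr n x y" for x :: "nat\<Rightarrow>bool" and n
    by (rule exI[of _ "x(n := \<not> x n)"]) (auto simp: agr_def fun_eq_iff)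
  then show ?thesis by (auto simp: perf_def cl_def)
qed

lemma nice_range_cl: "nice e \<Longrightarrow> cl (range e)"
  using nice_image_perf[OF _ perf_UNIV] by (simp add: perf_def)

lemma nice_preimage_perf:
  assumes ne: "nice e" and P: "perf P" and sub: "P \<subseteq> range e"
  shows "perf (e -` P)"
proof -
  have cont: "\<And>n z w. agr n z w \<Longrightarrow> agr n (e z) (e w)" using ne by (auto simp: nice_def)
  from ne have "\<forall>n. \<exists>m. \<forall>z w. agr m (e z) (e w) \<longrightarrow> agr n z w" by (simp add: nice_def)
  then obtain mm where mm: "\<And>n z w. agr (mm n) (e z) (e w) \<Longrightarrow> agr n z w" by metis
  have clP: "cl P" and limP: "\<forall>x\<in>P. \<forall>n. \<exists>y\<in>P. y \<noteq> x \<and> agr n x y" and neP: "P \<noteq> {}"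
    using P by (auto simp: perf_def)
  have "e -` P \<noteq> {}" using neP sub by blast
  moreover have "cl (e -` P)" unfolding cl_def
  proof (intro allI impI)
    fix z assume "\<forall>n. \<exists>w\<in>e -` P. agr n z w"
    then have "\<forall>n. \<exists>y\<in>P. agr n (e z) y" using cont by blast
    then show "z \<in> e -` P" using clP by (simp add: cl_def)
  qed
  moreover have "\<forall>z\<in>e -` P. \<forall>n. \<exists>w\<in>e -` P. w \<noteq> z \<and> agr n z w"
  proof (intro ballI allI)
    fix z n assume "z \<in> e -` P"
    then obtain y where "y \<in> P" "y \<noteq> e z" "agr (mm n) (e z) y" using limP by blast
    moreover then obtain w where "y = e w" using sub by blast
    ultimately show "\<exists>w\<in>e -` P. w \<noteq> z \<and> agr n z w" using mm[of n z w] by (intro bexI[of _ w]) auto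
  qed
  ultimately show ?thesis by (simp add: perf_def)
qed

lemma cyl_perf:
  assumes P: "perf P" and p: "p \<in> P"
  shows "perf (P \<inter> cyl n p)"
proof -
  have clP: "cl P" and limP: "\<forall>x\<in>P. \<forall>n. \<exists>y\<in>P. y \<noteq> x \<and> agr n x y"
    using P by (auto simp: perf_def)
  have "p \<in> P \<inter> cyl n p" using p by (simp add: cyl_def)
  moreover have "cl (P \<inter> cyl n p)" unfolding cl_def
  proof (intro allI impI)
    fix x assume h: "\<forall>m. \<exists>y\<in>P \<inter> cyl n p. agr m x y"
    then have "\<forall>m. \<exists>y\<in>P. agr m x y" by blast
    then have "x \<in> P" using clP by (simp add: cl_def)
    moreover from h obtain y where y: "y \<in> cyl n p" "agr n x y" by blast
    then have "agr n p y" by (simp add: cyl_def)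
    then have "agr n p x" using agr_trans[OF _ agr_sym[OF y(2)]] by blast
    ultimately show "x \<in> P \<inter> cyl n p" by (simp add: cyl_def)
  qed
  moreover have "\<forall>x\<in>P \<inter> cyl n p. \<forall>m. \<exists>y\<in>P \<inter> cyl n p. y \<noteq> x \<and> agr m x y"
  proof (intro ballI allI)
    fix x m assume x: "x \<in> P \<inter> cyl n p"
    then obtain y where y: "y \<in> P" "y \<noteq> x" "agr (max m n) x y" using limP by blast
    have "agr n p x" using x by (simp add: cyl_def)
    moreover have "agr n x y" using agr_mono[OF y(3)] by simp
    ultimately have "y \<in> cyl n p" unfolding cyl_def using agr_trans by blast
    moreover have "agr m x y" using agr_mono[OF y(3)] by simp
    ultimately show "\<exists>y\<in>P \<inter> cyl n p. y \<noteq> x \<and> agr m x y" using y by blast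
  qed
  ultimately show ?thesis by (auto simp: perf_def)
qed

definition s0 :: "(nat\<Rightarrow>bool) set \<Rightarrow> bool" where
  "s0 Y \<longleftrightarrow> (\<forall>P. perf P \<longrightarrow> (\<exists>Q. perf Q \<and> Q \<subseteq> P \<and> Q \<inter> Y = {}))"

lemma s0_iff: "marczewski_null Y \<longleftrightarrow> s0 Y"
  unfolding marczewski_null_def s0_def perfect_iff ..

lemma nice_s0:
  assumes ne: "nice e" and Y: "s0 Y"
  shows "s0 (e ` Y)"
  unfolding s0_def
proof (intro allI impI)
  fix P assume P: "perf P"
  have inj: "inj e" using ne by (simp add: nice_def)
  show "\<exists>Q. perf Q \<and> Q \<subseteq> P \<and> Q \<inter> e ` Y = {}"
  proof (cases "P \<subseteq> range e")
    case True
    have "perf (e -` P)" by (rule nice_preimage_perf[OF ne P True])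
    then obtain Q where Q: "perf Q" "Q \<subseteq> e -` P" "Q \<inter> Y = {}" using Y by (auto simp: s0_def)
    have "perf (e ` Q)" by (rule nice_image_perf[OF ne Q(1)])
    moreover have "e ` Q \<subseteq> P" using Q(2) by blast
    moreover have "e ` Q \<inter> e ` Y = {}" using Q(3) inj by (auto simp: inj_def)
    ultimately show ?thesis by blast
  next
    case False
    then obtain p where p: "p \<in> P" "p \<notin> range e" by blast
    then obtain n where n: "\<forall>y\<in>range e. \<not> agr n p y"
      using nice_range_cl[OF ne] unfolding cl_def by blast
    have "perf (P \<inter> cyl n p)" by (rule cyl_perf[OF P p(1)])
    moreover have "(P \<inter> cyl n p) \<inter> e ` Y = {}" using n by (auto simp: cyl_def)
    ultimately show ?thesis by blast
  qed
qed

definition line :: "(nat\<Rightarrow>bool) \<Rightarrow> (nat\<Rightarrow>bool) set" where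
  "line y = {x. \<forall>k. x (2*k) = y k}"

lemma line_perf: "perf (line y)"
proof -
  have "(\<lambda>i. if even i then y (i div 2) else False) \<in> line y" by (simp add: line_def)
  then have "line y \<noteq> {}" by blast
  moreover have "cl (line y)" unfolding cl_def line_def
  proof (intro allI impI CollectI)
    fix x k assume "\<forall>n. \<exists>w\<in>{x. \<forall>k. x (2 * k) = y k}. agr n x w"
    then obtain w where "\<forall>k. w (2*k) = y k" "agr (Suc (2*k)) x w" by blast
    then show "x (2*k) = y k" by (simp add: agr_def)
  qed
  moreover have "\<forall>x\<in>line y. \<forall>n. \<exists>w\<in>line y. w \<noteq> x \<and> agr n x w"
  proof (intro ballI allI)
    fix x n assume x: "x \<in> line y"
    define w where "w = x(Suc (2*n) := \<not> x (Suc (2*n)))"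
    have ne: "2*k \<noteq> Suc (2*n)" for k by presburger
    have "w \<in> line y" using x ne unfolding w_def line_def by simp
    moreover have "w \<noteq> x" unfolding w_def by (auto simp: fun_eq_iff)
    moreover have "agr n x w" unfolding w_def agr_def by auto
    ultimately show "\<exists>w\<in>line y. w \<noteq> x \<and> agr n x w" by blast
  qed
  ultimately show ?thesis by (simp add: perf_def)
qed

lemma line_disj: "x \<in> line y \<Longrightarrow> x \<in> line y' \<Longrightarrow> y = y'"
  by (auto simp: line_def fun_eq_iff)

definition small :: "'a set \<Rightarrow> bool" where
  "small A \<longleftrightarrow> |A| <o |UNIV :: (nat\<Rightarrow>bool) set|"

lemma small_subset: "small A \<Longrightarrow> B \<subseteq> A \<Longrightarrow> small B"
  unfolding small_def using card_of_mono1 ordLeq_ordLess_trans by blast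

lemma small_image: "small A \<Longrightarrow> small (f ` A)"
  unfolding small_def using card_of_image ordLeq_ordLess_trans by blast

lemma infinite_cantor: "\<not> finite (UNIV :: (nat\<Rightarrow>bool) set)"
proof
  assume "finite (UNIV :: (nat\<Rightarrow>bool) set)"
  moreover have "inj (\<lambda>n::nat. \<lambda>i. i = n)" by (auto simp: inj_def fun_eq_iff)
  ultimately have "finite (UNIV :: nat set)" using finite_imageD[of "\<lambda>n::nat. \<lambda>i. i = n"]
    by (metis finite_subset subset_UNIV inj_on_subset)
  then show False by simp
qed

lemma small_Un: "small A \<Longrightarrow> small B \<Longrightarrow> small (A \<union> B)"
  unfolding small_def using card_of_Un_ordLess_infinite infinite_cantor by blast

lemma small_finite: "finite A \<Longrightarrow> small A"
proof -
  assume "finite A"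
  have "natLeq \<le>o |UNIV :: (nat\<Rightarrow>bool) set|"
    using infinite_iff_natLeq_ordLeq[of "UNIV::(nat\<Rightarrow>bool) set"] infinite_cantor by simp
  moreover have "|A| <o natLeq" using iffD1[OF finite_iff_ordLess_natLeq \<open>finite A\<close>] .
  ultimately show ?thesis unfolding small_def using ordLess_ordLeq_trans by blast
qed

lemma small_insert: "small A \<Longrightarrow> small (insert x A)"
  using small_Un[of "{x}" A] small_finite[of "{x}"] by simp

lemma not_small_inj:
  fixes f :: "(nat\<Rightarrow>bool) \<Rightarrow> 'a"
  assumes "inj f" "range f \<subseteq> A" shows "\<not> small (A :: 'a set)"
proof -
  have "\<exists>f. inj_on f (UNIV :: (nat\<Rightarrow>bool) set) \<and> f ` UNIV \<subseteq> A" using assms by blast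
  then have "|UNIV :: (nat\<Rightarrow>bool) set| \<le>o |A|" by (rule iffD1[OF card_of_ordLeq])
  then show ?thesis unfolding small_def using not_ordLess_ordLeq by blast
qed

lemma not_small_UNIV: "\<not> small (UNIV :: (nat\<Rightarrow>bool) set)"
  by (rule not_small_inj[of id]) auto

lemma small_avoid:
  assumes P: "perf P" and A: "small A"
  shows "\<exists>Q. perf Q \<and> Q \<subseteq> P \<and> Q \<inter> A = {}"
proof -
  obtain e where e: "nice e" "range e \<subseteq> P" using scheme_nice[OF P] by blast
  have "\<exists>y. \<forall>z\<in>line y. e z \<notin> A"
  proof (rule ccontr)
    assume "\<not> ?thesis"
    then have "\<forall>y. \<exists>z. z \<in> line y \<and> e z \<in> A" by blast
    then obtain f where f: "\<And>y. f y \<in> line y" "\<And>y. e (f y) \<in> A" by metis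
    have "inj f" unfolding inj_def using f(1) line_disj by metis
    then have "inj (e \<circ> f)" using e(1) by (simp add: nice_def inj_compose)
    moreover have "range (e \<circ> f) \<subseteq> A" using f(2) by auto
    ultimately show False using not_small_inj A by blast
  qed
  then obtain y where y: "\<forall>z\<in>line y. e z \<notin> A" by blast
  have "perf (e ` line y)" by (rule nice_image_perf[OF e(1) line_perf])
  moreover have "e ` line y \<subseteq> P" using e(2) by blast
  moreover have "e ` line y \<inter> A = {}" using y by blast
  ultimately show ?thesis by blast
qed

definition pr :: "(nat\<Rightarrow>bool) \<Rightarrow> (nat\<Rightarrow>bool)" where
  "pr x = (\<lambda>k. x (2*k))"

definition thin :: "(nat\<Rightarrow>bool) set \<Rightarrow> bool" where
  "thin Q \<longleftrightarrow> (\<exists>y0. \<forall>a\<in>Q. \<forall>b\<in>Q. pr a = pr b \<longrightarrow> pr a = y0 \<or> a = b)"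

lemma thin_sub: assumes "thin Q" "Q' \<subseteq> Q" shows "thin Q'"
proof -
  from assms(1) obtain y0 where y0: "\<forall>a\<in>Q. \<forall>b\<in>Q. pr a = pr b \<longrightarrow> pr a = y0 \<or> a = b"
    unfolding thin_def by (elim exE) (rule that)
  have h: "\<forall>a\<in>Q'. \<forall>b\<in>Q'. pr a = pr b \<longrightarrow> pr a = y0 \<or> a = b"
  proof (intro ballI impI)
    fix a b assume "a \<in> Q'" "b \<in> Q'" "pr a = pr b"
    then show "pr a = y0 \<or> a = b" using y0 assms(2) by (simp add: subset_iff)
  qed
  show ?thesis unfolding thin_def apply (rule exI[of _ y0]) by (rule h)
qed

lemma line_pr: "x \<in> line y \<longleftrightarrow> pr x = y"
  by (auto simp: line_def pr_def fun_eq_iff)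

lemma lemmaA:
  assumes P: "perf P" shows "\<exists>Q. perf Q \<and> Q \<subseteq> P \<and> thin Q"
proof (cases "\<exists>p\<in>P. \<exists>n. \<forall>a\<in>P \<inter> cyl n p. pr a = pr p")
  case True
  then obtain p n where p: "p \<in> P" "\<forall>a\<in>P \<inter> cyl n p. pr a = pr p" by blast
  have "perf (P \<inter> cyl n p)" by (rule cyl_perf[OF P p(1)])
  moreover have "thin (P \<inter> cyl n p)" unfolding thin_def using p(2) by (intro exI[of _ "pr p"]) blast
  ultimately show ?thesis by blast
next
  case False
  have H0: "\<exists>a\<in>P. \<exists>b\<in>P. agr n x a \<and> agr n x b \<and> (\<exists>i\<in>{i. even i}. a i \<noteq> b i)" if x: "x \<in> P" for x n
  proof -
    from False x obtain a where a: "a \<in> P" "a \<in> cyl n x" "pr a \<noteq> pr x" by blast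
    then obtain k where "a (2*k) \<noteq> x (2*k)" by (auto simp: pr_def fun_eq_iff)
    then show ?thesis using a x by (intro bexI[of _ x] bexI[of _ a]) (auto simp: cyl_def)
  qed
  have H: "\<forall>x\<in>P. \<forall>n. \<exists>a\<in>P. \<exists>b\<in>P. agr n x a \<and> agr n x b \<and> (\<exists>i\<in>{i. even i}. a i \<noteq> b i)"
    using H0 by blast
  have "cl P" "P \<noteq> {}" using P by (auto simp: perf_def)
  from scheme_exists[OF this H] obtain e where
    e: "\<forall>z. e z \<in> P" "\<forall>n z w. agr n z w \<longrightarrow> agr n (e z) (e w)"
       "\<forall>n. \<exists>m. \<forall>z w. agr m (e z) (e w) \<longrightarrow> agr n z w" "\<forall>z w. z \<noteq> w \<longrightarrow> (\<exists>i\<in>{i. even i}. e z i \<noteq> e w i)"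
    by (elim exE conjE) (rule that)
  have sep: "pr (e z) \<noteq> pr (e w)" if "z \<noteq> w" for z w
  proof -
    from e(4) that obtain i where "even i" "e z i \<noteq> e w i" by blast
    then obtain k where "i = 2*k" by (auto elim: evenE)
    with \<open>e z i \<noteq> e w i\<close> show ?thesis by (auto simp: pr_def fun_eq_iff)
  qed
  have "inj e"
  proof (rule injI)
    fix z w assume ez: "e z = e w"
    show "z = w"
    proof (rule ccontr)
      assume "z \<noteq> w"
      then show False using sep[of z w] ez by simp
    qed
  qed
  then have ne: "nice e" using e(2,3) by (simp add: nice_def)
  have "perf (range e)" by (rule nice_image_perf[OF ne perf_UNIV])
  moreover have "range e \<subseteq> P" using e(1) by blast
  moreover have "thin (range e)"
  proof -
    have h: "\<forall>a\<in>range e. \<forall>b\<in>range e. pr a = pr b \<longrightarrow> pr a = undefined \<or> a = b"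
    proof (intro ballI impI)
      fix a b assume "a \<in> range e" "b \<in> range e" "pr a = pr b"
      then obtain z w where zw: "a = e z" "b = e w" by blast
      show "pr a = undefined \<or> a = b"
      proof (cases "z = w")
        case True then show ?thesis using zw by simp
      next
        case False then show ?thesis using sep[of z w] zw \<open>pr a = pr b\<close> by simp
      qed
    qed
    show ?thesis unfolding thin_def apply (rule exI[of _ undefined]) by (rule h)
  qed
  ultimately show ?thesis by (intro exI[of _ "range e"] conjI)
qed





definition Tr :: "(nat\<Rightarrow>bool) set \<Rightarrow> bool list set" where
  "Tr P = {s. \<exists>x\<in>P. \<forall>i<length s. x i = s ! i}"

definition hcode :: "(nat\<Rightarrow>bool) set \<Rightarrow> (nat\<Rightarrow>bool)" where
  "hcode P = (\<lambda>n. from_nat n \<in> Tr P)"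

lemma Tr_sub:
  assumes "Tr P = Tr P'" "cl P'" shows "P \<subseteq> P'"
proof
  fix x assume x: "x \<in> P"
  have "\<forall>n. \<exists>y\<in>P'. agr n x y"
  proof
    fix n
    have "map x [0..<n] \<in> Tr P" using x by (auto simp: Tr_def)
    then have "map x [0..<n] \<in> Tr P'" using assms(1) by simp
    then obtain y where "y \<in> P'" "\<forall>i<n. y i = x i" by (auto simp: Tr_def)
    then show "\<exists>y\<in>P'. agr n x y" by (auto simp: agr_def)
  qed
  then show "x \<in> P'" using assms(2) by (simp add: cl_def)
qed

lemma hcode_inj: "inj_on hcode {P. cl P}"
proof (rule inj_onI)
  fix P P' assume "P \<in> {P. cl P}" "P' \<in> {P. cl P}" and h: "hcode P = hcode P'"
  have "Tr P = Tr P'"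
  proof
    show "Tr P \<subseteq> Tr P'"
    proof
      fix s assume "s \<in> Tr P"
      then have "hcode P (to_nat s)" by (simp add: hcode_def)
      then have "hcode P' (to_nat s)" using h by simp
      then show "s \<in> Tr P'" by (simp add: hcode_def)
    qed
  next
    show "Tr P' \<subseteq> Tr P"
    proof
      fix s assume "s \<in> Tr P'"
      then have "hcode P' (to_nat s)" by (simp add: hcode_def)
      then have "hcode P (to_nat s)" using h by simp
      then show "s \<in> Tr P" by (simp add: hcode_def)
    qed
  qed
  then show "P = P'" using Tr_sub \<open>P \<in> _\<close> \<open>P' \<in> _\<close> by (metis equalityI mem_Collect_eq)
qed

definition G :: "(nat\<Rightarrow>bool) \<Rightarrow> (nat\<Rightarrow>bool) set" where
  "G a = (let P = inv_into {P. perf P} hcode a in if perf P then P else UNIV)"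

lemma G_perf: "perf (G a)"
  by (simp add: G_def Let_def perf_UNIV)

lemma G_surj: assumes "perf P" shows "\<exists>a. G a = P"
proof -
  have "inj_on hcode {P. perf P}"
    by (rule inj_on_subset[OF hcode_inj]) (auto simp: perf_def)
  then have "inv_into {P. perf P} hcode (hcode P) = P" using assms by (simp add: inv_into_f_f)
  then have "G (hcode P) = P" using assms by (simp add: G_def)
  then show ?thesis by blast
qed

definition W :: "(nat\<Rightarrow>bool) rel" where
  "W = |UNIV :: (nat\<Rightarrow>bool) set|"

lemma wo_W: "wo_rel W"
  unfolding wo_rel_def W_def by (rule card_of_Well_order)

lemma Field_W: "Field W = UNIV"
  unfolding W_def by (rule Field_card_of)

lemma small_underS: "small (underS W a)"
  unfolding small_def W_def
  using card_of_underS[OF card_of_Card_order, of a "UNIV :: (nat\<Rightarrow>bool) set"] by (simp add: Field_card_of)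

lemma W_total: "a \<noteq> b \<Longrightarrow> a \<in> underS W b \<or> b \<in> underS W a"
  using wo_rel.TOTALS[OF wo_W] Field_W by (auto simp: underS_def)

lemma W_asym: "a \<in> underS W b \<Longrightarrow> b \<notin> underS W a"
proof -
  assume "a \<in> underS W b"
  moreover have "antisym W" using wo_W by (simp add: wo_rel_def well_order_on_def linear_order_on_def partial_order_on_def)
  ultimately show "b \<notin> underS W a" by (auto simp: underS_def antisym_def)
qed

locale mainc =
  fixes Z :: "(nat\<Rightarrow>bool) set"
  assumes dense: "\<And>R. perf R \<Longrightarrow> \<not> small (R \<inter> Z)"
begin

definition Qc :: "((nat\<Rightarrow>bool) \<Rightarrow> (nat\<Rightarrow>bool) set \<times> (nat\<Rightarrow>bool)) \<Rightarrow> (nat\<Rightarrow>bool) \<Rightarrow> (nat\<Rightarrow>bool) set" where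
  "Qc f a = (SOME Q. perf Q \<and> Q \<subseteq> G a \<and> thin Q \<and> Q \<inter> (snd \<circ> f) ` underS W a = {})"

definition Xc :: "((nat\<Rightarrow>bool) \<Rightarrow> (nat\<Rightarrow>bool) set \<times> (nat\<Rightarrow>bool)) \<Rightarrow> (nat\<Rightarrow>bool) \<Rightarrow> (nat\<Rightarrow>bool)" where
  "Xc f a = (SOME x. x \<in> Z \<and> x \<notin> (snd \<circ> f) ` underS W a \<and> x \<notin> Qc f a \<and> (\<forall>b\<in>underS W a. x \<notin> fst (f b)))"

definition Hc where "Hc f a = (Qc f a, Xc f a)"

lemma adm: "wo_rel.adm_wo W Hc"
  unfolding wo_rel.adm_wo_def[OF wo_W]
proof (intro allI impI)
  fix f g :: "(nat\<Rightarrow>bool) \<Rightarrow> (nat\<Rightarrow>bool) set \<times> (nat\<Rightarrow>bool)" and a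
  assume h: "\<forall>y\<in>underS W a. f y = g y"
  have 1: "(snd \<circ> f) ` underS W a = (snd \<circ> g) ` underS W a" using h by (auto simp: image_def)
  have 2: "Qc f a = Qc g a" unfolding Qc_def 1 ..
  have 3: "(\<forall>b\<in>underS W a. x \<notin> fst (f b)) = (\<forall>b\<in>underS W a. x \<notin> fst (g b))" for x using h by auto
  have "Xc f a = Xc g a" unfolding Xc_def 1 2 3 ..
  then show "Hc f a = Hc g a" using 2 by (simp add: Hc_def)
qed

definition F where "F = wo_rel.worec W Hc"

lemma F_eq: "F a = Hc F a"
  unfolding F_def using wo_rel.worec_fixpoint[OF wo_W adm] by metis

definition Qa where "Qa a = fst (F a)"
definition xa where "xa a = snd (F a)"

lemma Qa_eq: "Qa a = Qc F a" and xa_eq: "xa a = Xc F a"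
  using F_eq[of a] by (auto simp: Qa_def xa_def Hc_def)

lemma A_eq: "(snd \<circ> F) ` underS W a = xa ` underS W a"
  by (auto simp: xa_def)

lemma fact1: "perf (Qa a) \<and> Qa a \<subseteq> G a \<and> thin (Qa a) \<and> Qa a \<inter> xa ` underS W a = {}"
proof -
  obtain Q1 where Q1: "perf Q1" "Q1 \<subseteq> G a" "thin Q1" using lemmaA[OF G_perf] by blast
  have "small (xa ` underS W a)" by (rule small_image[OF small_underS])
  from small_avoid[OF Q1(1) this] obtain Q where Q: "perf Q" "Q \<subseteq> Q1" "Q \<inter> xa ` underS W a = {}" by blast
  have "thin Q" by (rule thin_sub[OF Q1(3) Q(2)])
  then have "\<exists>Q. perf Q \<and> Q \<subseteq> G a \<and> thin Q \<and> Q \<inter> (snd \<circ> F) ` underS W a = {}"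
    using Q Q1(2) A_eq by blast
  then have "perf (Qc F a) \<and> Qc F a \<subseteq> G a \<and> thin (Qc F a) \<and> Qc F a \<inter> (snd \<circ> F) ` underS W a = {}"
    unfolding Qc_def by (rule someI_ex)
  then show ?thesis using Qa_eq A_eq by simp
qed

lemma fact2: "xa a \<in> Z \<and> xa a \<notin> xa ` underS W a \<and> xa a \<notin> Qa a \<and> (\<forall>b\<in>underS W a. xa a \<notin> Qa b)"
proof -
  define B where "B = insert a (underS W a)"
  have smB: "small B" unfolding B_def by (rule small_insert[OF small_underS])
  have thinb: "thin (Qa b)" for b using fact1 by blast
  define y0 where "y0 b = (SOME y. \<forall>p\<in>Qa b. \<forall>q\<in>Qa b. pr p = pr q \<longrightarrow> pr p = y \<or> p = q)" for b
  have y0: "\<forall>p\<in>Qa b. \<forall>q\<in>Qa b. pr p = pr q \<longrightarrow> pr p = y0 b \<or> p = q" for b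
    unfolding y0_def using thinb[of b] unfolding thin_def by (rule someI_ex)
  have "small (y0 ` B)" by (rule small_image[OF smB])
  then have "y0 ` B \<noteq> UNIV" using not_small_UNIV by metis
  then obtain y where y: "y \<notin> y0 ` B" by blast
  define L where "L = line y"
  define pick where "pick b = (SOME q. q \<in> Qa b \<inter> L)" for b
  have sub1: "Qa b \<inter> L \<subseteq> {pick b}" if "b \<in> B" for b
  proof
    fix q assume q: "q \<in> Qa b \<inter> L"
    then have "\<exists>q. q \<in> Qa b \<inter> L" by blast
    then have pk: "pick b \<in> Qa b \<inter> L" unfolding pick_def by (rule someI_ex)
    then have pp: "pr (pick b) = y" "pr q = y" using q by (auto simp: L_def line_pr)
    have ny: "y \<noteq> y0 b" using y that by blast
    have "q \<in> Qa b" "pick b \<in> Qa b" using q pk by auto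
    then have "pr q = pr (pick b) \<longrightarrow> pr q = y0 b \<or> q = pick b" using y0[of b] by blast
    then have "q = pick b" using pp ny by simp
    then show "q \<in> {pick b}" by simp
  qed
  define C where "C = xa ` underS W a \<union> pick ` B"
  have smC: "small C" unfolding C_def
    by (rule small_Un[OF small_image[OF small_underS] small_image[OF smB]])
  have "\<not> small (L \<inter> Z)" using dense line_perf by (simp add: L_def)
  then have "\<not> L \<inter> Z \<subseteq> C" using smC small_subset by blast
  then obtain x where x: "x \<in> L" "x \<in> Z" "x \<notin> C" by blast
  have xnot: "x \<notin> Qa b" if "b \<in> B" for b
  proof
    assume "x \<in> Qa b"
    then have "x = pick b" using sub1[OF that] x(1) by blast
    then show False using x(3) that by (simp add: C_def)
  qed
  have "\<exists>x. x \<in> Z \<and> x \<notin> (snd \<circ> F) ` underS W a \<and> x \<notin> Qc F a \<and> (\<forall>b\<in>underS W a. x \<notin> fst (F b))"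
  proof (intro exI[of _ x] conjI ballI)
    show "x \<in> Z" by fact
    show "x \<notin> (snd \<circ> F) ` underS W a" using x(3) A_eq by (simp add: C_def)
    show "x \<notin> Qc F a" using xnot[of a] Qa_eq by (simp add: B_def)
    fix b assume "b \<in> underS W a"
    then show "x \<notin> fst (F b)" using xnot[of b] by (simp add: B_def Qa_def)
  qed
  then have "Xc F a \<in> Z \<and> Xc F a \<notin> (snd \<circ> F) ` underS W a \<and> Xc F a \<notin> Qc F a \<and> (\<forall>b\<in>underS W a. Xc F a \<notin> fst (F b))"
    unfolding Xc_def by (rule someI_ex)
  then show ?thesis using xa_eq Qa_eq A_eq by (simp add: Qa_def)
qed

lemma xa_inj: "inj xa"
proof (rule injI, rule ccontr)
  fix a b assume eq: "xa a = xa b" and ne: "a \<noteq> b"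
  from W_total[OF ne] show False
  proof
    assume "a \<in> underS W b"
    then have "xa a \<in> xa ` underS W b" by blast
    then show False using fact2[of b] eq by simp
  next
    assume "b \<in> underS W a"
    then have "xa b \<in> xa ` underS W a" by blast
    then show False using fact2[of a] eq by simp
  qed
qed

lemma result: "\<exists>Z'. Z' \<subseteq> Z \<and> Z' \<approx> (UNIV :: (nat\<Rightarrow>bool) set) \<and> s0 Z'"
proof -
  have sub: "range xa \<subseteq> Z" using fact2 by blast
  have "bij_betw xa UNIV (range xa)" using xa_inj by (simp add: bij_betw_def)
  then have eqp: "range xa \<approx> (UNIV :: (nat\<Rightarrow>bool) set)"
    by (meson eqpoll_def eqpoll_sym)
  have "s0 (range xa)" unfolding s0_def
  proof (intro allI impI)
    fix P assume "perf P"
    then obtain a where a: "G a = P" using G_surj by blast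
    have disj: "Qa a \<inter> range xa = {}"
    proof -
      have "xa b \<notin> Qa a" for b
      proof (cases "b \<in> underS W a")
        case True
        then show ?thesis using fact1[of a] by blast
      next
        case False
        then have "b = a \<or> a \<in> underS W b" using W_total by blast
        then show ?thesis using fact2[of b] by blast
      qed
      then show ?thesis by blast
    qed
    show "\<exists>Q. perf Q \<and> Q \<subseteq> P \<and> Q \<inter> range xa = {}"
      using fact1[of a] a disj by (intro exI[of _ "Qa a"]) blast
  qed
  then show ?thesis using sub eqp by (intro exI[of _ "range xa"]) blast
qed

end



theorem lemma2p3:
  fixes X :: "(nat \<Rightarrow> bool) set"
  assumes "X \<approx> (UNIV :: (nat \<Rightarrow> bool) set)"
  shows "\<exists>X'. X' \<subseteq> X \<and> X' \<approx> (UNIV :: (nat \<Rightarrow> bool) set) \<and> marczewski_null X'"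
proof (cases "s0 X")
  case True
  then show ?thesis using assms s0_iff by blast
next
  case False
  then obtain P0 where P0: "perf P0" and hit: "\<And>Q. perf Q \<Longrightarrow> Q \<subseteq> P0 \<Longrightarrow> Q \<inter> X \<noteq> {}"
    unfolding s0_def by blast
  obtain e where e: "nice e" "range e \<subseteq> P0" using scheme_nice[OF P0] by blast
  have inj: "inj e" using e(1) by (simp add: nice_def)
  define Z where "Z = e -` X"
  have "mainc Z"
  proof
    fix R assume R: "perf R"
    show "\<not> small (R \<inter> Z)"
    proof
      assume sm: "small (R \<inter> Z)"
      have pR: "perf (e ` R)" by (rule nice_image_perf[OF e(1) R])
      from small_avoid[OF pR small_image[OF sm, of e]] obtain Q where
        Q: "perf Q" "Q \<subseteq> e ` R" "Q \<inter> e ` (R \<inter> Z) = {}" by blast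
      have "Q \<inter> X = {}"
      proof (rule ccontr)
        assume "Q \<inter> X \<noteq> {}"
        then obtain q where q: "q \<in> Q" "q \<in> X" by blast
        then obtain r where "r \<in> R" "q = e r" using Q(2) by blast
        then have "q \<in> e ` (R \<inter> Z)" using q by (auto simp: Z_def)
        then show False using Q(3) q by blast
      qed
      moreover have "Q \<subseteq> P0" using Q(2) e(2) by blast
      ultimately show False using hit[OF Q(1)] by blast
    qed
  qed
  then obtain Z' where Z': "Z' \<subseteq> Z" "Z' \<approx> (UNIV :: (nat\<Rightarrow>bool) set)" "s0 Z'"
    using mainc.result by blast
  have "e ` Z' \<subseteq> X" using Z'(1) by (auto simp: Z_def)
  moreover have "e ` Z' \<approx> (UNIV :: (nat\<Rightarrow>bool) set)"
    using eqpoll_trans[OF inj_on_image_eqpoll_self[OF inj_on_subset[OF inj subset_UNIV]] Z'(2)] .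
  moreover have "marczewski_null (e ` Z')" using nice_s0[OF e(1) Z'(3)] s0_iff by blast
  ultimately show ?thesis by blast
qed


end
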